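(* Let $K$ be a field and $f\colon R\to S$ a morphism of Zinbiel algebras. If $H^3_{\mathrm{Zinb}}(f,f)=0$, then every $2$-cocycle $\theta_1\in C^2_{\mathrm{Zinb}}(f,f)$ is the infinitesimal of some deformation of $f$.
   Context: A Zinbiel algebra over $K$ is a $K$-vector space $R$ with bilinear product $x\cdot y$ (also written $m_R(x,y)$) satisfying $(x\cdot y)\cdot z=x\cdot(y\cdot z)+x\cdot(z\cdot y)$. A morphism $f\colon R\to S$ is a linear map with $f(x\cdot y)=f(x)\cdot f(y)$. $R$ is a bimodule over itself, $S$ over itself, and $S$ is an $R$-bimodule via $r\cdot s=f(r)\cdot s$, $s\cdot r=s\cdot f(r)$. For a bimodule $A$ over $R$ and $1\le n\le4$, $C^n_{\mathrm{Zinb}}(R,A)=\mathrm{Hom}_K(R^{\otimes n},A)$ with $(d^1\varphi)(x,y)=x\cdot\varphi(y)-\varphi(x\cdot y)+\varphi(x)\cdot y$, $(d^2\varphi)(x,y,z)=x\cdot(\varphi(y,z)+\varphi(z,y))-\varphi(x\cdot y,z)+\varphi(x,y\cdot z+z\cdot y)-\varphi(x,y)\cdot z$, $(d^3\varphi)(x,y,z,w)=x\cdot\{\varphi(y,z,w)-\varphi(z,w,y)+\varphi(z,y,w)-\varphi(w,z,y)\}-\varphi(x\cdot y,z,w)+\varphi(x,y\cdot z+z\cdot y,w)-\varphi(x,y,z\cdot w+w\cdot z)+\varphi(x,y,z)\cdot w$. The deformation complex: $C^0_{\mathrm{Zinb}}(R,S)=0$, $d^0=0$, $C^n_{\mathrm{Zinb}}(f,f)=C^n_{\mathrm{Zinb}}(R,R)\times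 C^n_{\mathrm{Zinb}}(S,S)\times C^{n-1}_{\mathrm{Zinb}}(R,S)$ ($1\le n\le4$), $d^i_f(\xi;\pi;\varphi)=(d^i\xi;d^i\pi;f\xi-\pi f-d^{i-1}\varphi)$ with $(f\xi)(x_1,\dots)=f(\xi(x_1,\dots))$, $(\pi f)(x_1,\dots)=\pi(f(x_1),\dots)$. $H^3_{\mathrm{Zinb}}(f,f)=\ker d^3_f/\operatorname{im}d^2_f$; a $2$-cocycle is an element of $\ker d^2_f$. A deformation of $f$ is a formal power series $\Theta_t=\sum_{i\ge0}\theta_it^i$ with $\theta_0=(m_R;m_S;f)$ and $\theta_i=(m_{R,i};m_{S,i};f_i)\in C^2_{\mathrm{Zinb}}(f,f)$, such that for $*=R,S$ the bilinear map $M_{*,t}=\sum_i m_{*,i}t^i$ satisfies $M_{*,t}(M_{*,t}(x,y),z)=M_{*,t}(x,M_{*,t}(y,z))+M_{*,t}(x,M_{*,t}(z,y))$ for $x,y,z\in *$, and $F_t=\sum_if_it^i$ satisfies $F_t(M_{R,t}(x,y))=M_{S,t}(F_t(x),F_t(y))$ for $x,y\in R$. Its infinitesimal is $\theta_1$. *)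

theory Defs
  imports Complex_Main
begin

text \<open>Vector spaces over a field 'k are types of class ab_group_add equipped with a
  scalar multiplication satisfying the vector_space locale.  Cochains in
  Hom_K(R^{\<otimes>n}, A) are represented as n-linear maps.\<close>

definition zinbiel :: "('a::ab_group_add \<Rightarrow> 'a \<Rightarrow> 'a) \<Rightarrow> bool" where
  "zinbiel m \<longleftrightarrow> (\<forall>x y z. m (m x y) z = m x (m y z) + m x (m z y))"

definition zinb_alg :: "('k::field \<Rightarrow> 'a::ab_group_add \<Rightarrow> 'a) \<Rightarrow> ('a \<Rightarrow> 'a \<Rightarrow> 'a) \<Rightarrow> bool" where
  "zinb_alg s m \<longleftrightarrow> vector_space s \<and>
     (\<forall>x. Vector_Spaces.linear s s (m x)) \<and> (\<forall>y. Vector_Spaces.linear s s (\<lambda>x. m x y)) \<and>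
     zinbiel m"

definition zinb_morphism ::
  "('k::field \<Rightarrow> 'r::ab_group_add \<Rightarrow> 'r) \<Rightarrow> ('k \<Rightarrow> 's::ab_group_add \<Rightarrow> 's) \<Rightarrow>
   ('r \<Rightarrow> 'r \<Rightarrow> 'r) \<Rightarrow> ('s \<Rightarrow> 's \<Rightarrow> 's) \<Rightarrow> ('r \<Rightarrow> 's) \<Rightarrow> bool" where
  "zinb_morphism sR sS mR mS f \<longleftrightarrow> Vector_Spaces.linear sR sS f \<and> (\<forall>x y. f (mR x y) = mS (f x) (f y))"

definition C1 :: "('k::field \<Rightarrow> 'r::ab_group_add \<Rightarrow> 'r) \<Rightarrow> ('k \<Rightarrow> 'a::ab_group_add \<Rightarrow> 'a) \<Rightarrow> ('r \<Rightarrow> 'a) set" where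
  "C1 sR sA = {\<phi>. Vector_Spaces.linear sR sA \<phi>}"

definition C2 :: "('k::field \<Rightarrow> 'r::ab_group_add \<Rightarrow> 'r) \<Rightarrow> ('k \<Rightarrow> 'a::ab_group_add \<Rightarrow> 'a) \<Rightarrow> ('r \<Rightarrow> 'r \<Rightarrow> 'a) set" where
  "C2 sR sA = {\<phi>. (\<forall>y. Vector_Spaces.linear sR sA (\<lambda>x. \<phi> x y))
                 \<and> (\<forall>x. Vector_Spaces.linear sR sA (\<lambda>y. \<phi> x y))}"

definition C3 :: "('k::field \<Rightarrow> 'r::ab_group_add \<Rightarrow> 'r) \<Rightarrow> ('k \<Rightarrow> 'a::ab_group_add \<Rightarrow> 'a) \<Rightarrow> ('r \<Rightarrow> 'r \<Rightarrow> 'r \<Rightarrow> 'a) set" where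
  "C3 sR sA = {\<phi>. (\<forall>y z. Vector_Spaces.linear sR sA (\<lambda>x. \<phi> x y z))
                 \<and> (\<forall>x z. Vector_Spaces.linear sR sA (\<lambda>y. \<phi> x y z))
                 \<and> (\<forall>x y. Vector_Spaces.linear sR sA (\<lambda>z. \<phi> x y z))}"

text \<open>Coboundaries for a bimodule A over (R, mR) with left action lA and right action rA.\<close>

definition d1 :: "('r \<Rightarrow> 'r \<Rightarrow> 'r) \<Rightarrow> ('r \<Rightarrow> 'a \<Rightarrow> 'a) \<Rightarrow> ('a \<Rightarrow> 'r \<Rightarrow> 'a) \<Rightarrow>
    ('r \<Rightarrow> 'a::ab_group_add) \<Rightarrow> 'r \<Rightarrow> 'r \<Rightarrow> 'a" where
  "d1 mR lA rA \<phi> = (\<lambda>x y. lA x (\<phi> y) - \<phi> (mR x y) + rA (\<phi> x) y)"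

definition d2 :: "('r::ab_group_add \<Rightarrow> 'r \<Rightarrow> 'r) \<Rightarrow> ('r \<Rightarrow> 'a \<Rightarrow> 'a) \<Rightarrow> ('a \<Rightarrow> 'r \<Rightarrow> 'a) \<Rightarrow>
    ('r \<Rightarrow> 'r \<Rightarrow> 'a::ab_group_add) \<Rightarrow> 'r \<Rightarrow> 'r \<Rightarrow> 'r \<Rightarrow> 'a" where
  "d2 mR lA rA \<phi> = (\<lambda>x y z. lA x (\<phi> y z + \<phi> z y) - \<phi> (mR x y) z
        + \<phi> x (mR y z + mR z y) - rA (\<phi> x y) z)"

definition d3 :: "('r::ab_group_add \<Rightarrow> 'r \<Rightarrow> 'r) \<Rightarrow> ('r \<Rightarrow> 'a \<Rightarrow> 'a) \<Rightarrow> ('a \<Rightarrow> 'r \<Rightarrow> 'a) \<Rightarrow>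
    ('r \<Rightarrow> 'r \<Rightarrow> 'r \<Rightarrow> 'a::ab_group_add) \<Rightarrow> 'r \<Rightarrow> 'r \<Rightarrow> 'r \<Rightarrow> 'r \<Rightarrow> 'a" where
  "d3 mR lA rA \<phi> = (\<lambda>x y z w. lA x (\<phi> y z w - \<phi> z w y + \<phi> z y w - \<phi> w z y)
        - \<phi> (mR x y) z w + \<phi> x (mR y z + mR z y) w - \<phi> x y (mR z w + mR w z)
        + rA (\<phi> x y z) w)"

text \<open>Deformation complex C^n(f,f) = C^n(R,R) x C^n(S,S) x C^{n-1}(R,S) (n = 2,3)
  and the differentials d^2_f, d^3_f. R and S are bimodules over themselves; S is an
  R-bimodule via f.\<close>

definition Cf2 ::
  "('k::field \<Rightarrow> 'r::ab_group_add \<Rightarrow> 'r) \<Rightarrow> ('k \<Rightarrow> 's::ab_group_add \<Rightarrow> 's) \<Rightarrow>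
   (('r \<Rightarrow> 'r \<Rightarrow> 'r) \<times> ('s \<Rightarrow> 's \<Rightarrow> 's) \<times> ('r \<Rightarrow> 's)) set" where
  "Cf2 sR sS = C2 sR sR \<times> C2 sS sS \<times> C1 sR sS"

definition Cf3 ::
  "('k::field \<Rightarrow> 'r::ab_group_add \<Rightarrow> 'r) \<Rightarrow> ('k \<Rightarrow> 's::ab_group_add \<Rightarrow> 's) \<Rightarrow>
   (('r \<Rightarrow> 'r \<Rightarrow> 'r \<Rightarrow> 'r) \<times> ('s \<Rightarrow> 's \<Rightarrow> 's \<Rightarrow> 's) \<times> ('r \<Rightarrow> 'r \<Rightarrow> 's)) set" where
  "Cf3 sR sS = C3 sR sR \<times> C3 sS sS \<times> C2 sR sS"

definition df2 ::
  "('r::ab_group_add \<Rightarrow> 'r \<Rightarrow> 'r) \<Rightarrow> ('s::ab_group_add \<Rightarrow> 's \<Rightarrow> 's) \<Rightarrow> ('r \<Rightarrow> 's) \<Rightarrow>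
   ('r \<Rightarrow> 'r \<Rightarrow> 'r) \<times> ('s \<Rightarrow> 's \<Rightarrow> 's) \<times> ('r \<Rightarrow> 's) \<Rightarrow>
   ('r \<Rightarrow> 'r \<Rightarrow> 'r \<Rightarrow> 'r) \<times> ('s \<Rightarrow> 's \<Rightarrow> 's \<Rightarrow> 's) \<times> ('r \<Rightarrow> 'r \<Rightarrow> 's)" where
  "df2 mR mS f = (\<lambda>(\<xi>, \<pi>, \<phi>).
     (d2 mR mR mR \<xi>, d2 mS mS mS \<pi>,
      \<lambda>x y. f (\<xi> x y) - \<pi> (f x) (f y)
             - d1 mR (\<lambda>r s. mS (f r) s) (\<lambda>s r. mS s (f r)) \<phi> x y))"

definition df3 ::
  "('r::ab_group_add \<Rightarrow> 'r \<Rightarrow> 'r) \<Rightarrow> ('s::ab_group_add \<Rightarrow> 's \<Rightarrow> 's) \<Rightarrow> ('r \<Rightarrow> 's) \<Rightarrow>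
   ('r \<Rightarrow> 'r \<Rightarrow> 'r \<Rightarrow> 'r) \<times> ('s \<Rightarrow> 's \<Rightarrow> 's \<Rightarrow> 's) \<times> ('r \<Rightarrow> 'r \<Rightarrow> 's) \<Rightarrow>
   ('r \<Rightarrow> 'r \<Rightarrow> 'r \<Rightarrow> 'r \<Rightarrow> 'r) \<times> ('s \<Rightarrow> 's \<Rightarrow> 's \<Rightarrow> 's \<Rightarrow> 's) \<times> ('r \<Rightarrow> 'r \<Rightarrow> 'r \<Rightarrow> 's)" where
  "df3 mR mS f = (\<lambda>(\<xi>, \<pi>, \<phi>).
     (d3 mR mR mR \<xi>, d3 mS mS mS \<pi>,
      \<lambda>x y z. f (\<xi> x y z) - \<pi> (f x) (f y) (f z)
             - d2 mR (\<lambda>r s. mS (f r) s) (\<lambda>s r. mS s (f r)) \<phi> x y z))"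

definition H3_zero ::
  "('k::field \<Rightarrow> 'r::ab_group_add \<Rightarrow> 'r) \<Rightarrow> ('k \<Rightarrow> 's::ab_group_add \<Rightarrow> 's) \<Rightarrow>
   ('r \<Rightarrow> 'r \<Rightarrow> 'r) \<Rightarrow> ('s \<Rightarrow> 's \<Rightarrow> 's) \<Rightarrow> ('r \<Rightarrow> 's) \<Rightarrow> bool" where
  "H3_zero sR sS mR mS f \<longleftrightarrow>
     (\<forall>c \<in> Cf3 sR sS. df3 mR mS f c = (\<lambda>_ _ _ _. 0, \<lambda>_ _ _ _. 0, \<lambda>_ _ _. 0) \<longrightarrow> (\<exists>b \<in> Cf2 sR sS. df2 mR mS f b = c))"

text \<open>A deformation of f: sequences of coefficients of the formal power series
  M_{R,t}, M_{S,t}, F_t; the power-series identities are stated coefficientwise.\<close>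

definition is_deformation ::
  "('k::field \<Rightarrow> 'r::ab_group_add \<Rightarrow> 'r) \<Rightarrow> ('k \<Rightarrow> 's::ab_group_add \<Rightarrow> 's) \<Rightarrow>
   ('r \<Rightarrow> 'r \<Rightarrow> 'r) \<Rightarrow> ('s \<Rightarrow> 's \<Rightarrow> 's) \<Rightarrow> ('r \<Rightarrow> 's) \<Rightarrow>
   (nat \<Rightarrow> 'r \<Rightarrow> 'r \<Rightarrow> 'r) \<Rightarrow> (nat \<Rightarrow> 's \<Rightarrow> 's \<Rightarrow> 's) \<Rightarrow> (nat \<Rightarrow> 'r \<Rightarrow> 's) \<Rightarrow> bool" where
  "is_deformation sR sS mR mS f MR MS F \<longleftrightarrow>
     MR 0 = mR \<and> MS 0 = mS \<and> F 0 = f \<and>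
     (\<forall>i. (MR i, MS i, F i) \<in> Cf2 sR sS) \<and>
     (\<forall>n x y z. (\<Sum>i\<le>n. MR i (MR (n - i) x y) z)
                = (\<Sum>i\<le>n. MR i x (MR (n - i) y z) + MR i x (MR (n - i) z y))) \<and>
     (\<forall>n x y z. (\<Sum>i\<le>n. MS i (MS (n - i) x y) z)
                = (\<Sum>i\<le>n. MS i x (MS (n - i) y z) + MS i x (MS (n - i) z y))) \<and>
     (\<forall>n x y. (\<Sum>i\<le>n. F i (MR (n - i) x y))
               = (\<Sum>i\<le>n. \<Sum>j\<le>n - i. MS i (F j x) (F (n - i - j) y)))"

end

theory Submission
  imports Defs "HOL-Library.Function_Algebras"
begin


definition Az :: "('a::ab_group_add \<Rightarrow> 'a \<Rightarrow> 'a) \<Rightarrow> 'a \<Rightarrow> 'a \<Rightarrow> 'a \<Rightarrow> 'a" where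
  "Az m x y z = m (m x y) z - m x (m y z) - m x (m z y)"

definition Ez :: "('a::ab_group_add \<Rightarrow> 'a \<Rightarrow> 'a) \<Rightarrow> ('b::ab_group_add \<Rightarrow> 'b \<Rightarrow> 'b) \<Rightarrow> ('a \<Rightarrow> 'b) \<Rightarrow> 'a \<Rightarrow> 'a \<Rightarrow> 'b" where
  "Ez mR mS F x y = F (mR x y) - mS (F x) (F y)"

definition biadd :: "('a::ab_group_add \<Rightarrow> 'b::ab_group_add \<Rightarrow> 'c::ab_group_add) \<Rightarrow> bool" where
  "biadd m \<longleftrightarrow> (\<forall>c. additive (\<lambda>a. m a c)) \<and> (\<forall>a. additive (m a))"

lemma biadd_rules:
  assumes "biadd m"
  shows "m (a + b) c = m a c + m b c" "m a (b + c) = m a b + m a c"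
    "m (a - b) c = m a c - m b c" "m a (b - c) = m a b - m a c"
    "m (- a) c = - m a c" "m a (- c) = - m a c" "m 0 c = 0" "m a 0 = 0"
  using assms unfolding biadd_def
  by (auto simp: additive.add additive.diff additive.minus additive.zero
      dest: spec[of _ c] spec[of _ a] intro: additive.add[of "\<lambda>a. m a c"] additive.diff[of "\<lambda>a. m a c"]
      additive.minus[of "\<lambda>a. m a c"] additive.zero[of "\<lambda>a. m a c"] )

lemma I1:
  assumes "biadd m"
  shows "d3 m m m (Az m) x y z w = 0"
  unfolding d3_def Az_def
  by (simp only: biadd_rules[OF assms]) (simp add: algebra_simps)

lemma I2:
  assumes "biadd mR" "biadd mS" "additive F"
  shows "F (Az mR x y z) - Az mS (F x) (F y) (F z)
     - d2 mR (\<lambda>r s. mS (F r) s) (\<lambda>s r. mS s (F r)) (\<lambda>a b. - Ez mR mS F a b) x y z = 0"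
  unfolding d2_def Az_def Ez_def
  by (simp only: biadd_rules[OF assms(1)] biadd_rules[OF assms(2)] additive.add[OF assms(3)]
      additive.diff[OF assms(3)] additive.minus[OF assms(3)]) (simp add: algebra_simps)



definition st2 :: "(nat \<Rightarrow> 'a::ab_group_add \<Rightarrow> 'a \<Rightarrow> 'b::ab_group_add) \<Rightarrow> (nat \<Rightarrow> 'a) \<Rightarrow> (nat \<Rightarrow> 'a) \<Rightarrow> nat \<Rightarrow> 'b" where
  "st2 M u v = (\<lambda>n. \<Sum>i\<le>n. \<Sum>j\<le>n - i. M i (u j) (v (n - i - j)))"

definition stF :: "(nat \<Rightarrow> 'a::ab_group_add \<Rightarrow> 'b::ab_group_add) \<Rightarrow> (nat \<Rightarrow> 'a) \<Rightarrow> nat \<Rightarrow> 'b" where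
  "stF F u = (\<lambda>n. \<Sum>i\<le>n. F i (u (n - i)))"

definition dl :: "'a::zero \<Rightarrow> nat \<Rightarrow> 'a" where
  "dl x = (\<lambda>n. if n = 0 then x else 0)"

definition sh :: "(nat \<Rightarrow> 'a::zero) \<Rightarrow> nat \<Rightarrow> 'a" where
  "sh u = (\<lambda>n. case n of 0 \<Rightarrow> 0 | Suc k \<Rightarrow> u k)"

lemma sh_0[simp]: "sh u 0 = 0" and sh_Suc[simp]: "sh u (Suc k) = u k"
  by (simp_all add: sh_def)

lemma sh_additive: "additive (sh :: (nat \<Rightarrow> 'a::ab_group_add) \<Rightarrow> _)"
  by standard (auto simp: sh_def split: nat.splits)

lemma sh_rules: "sh (a + b) = sh a + sh b" "sh (a - b) = sh a - sh b" "sh (- a) = - sh a"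
  "sh (0::nat \<Rightarrow> 'a::ab_group_add) = 0"
  for a b :: "nat \<Rightarrow> 'a::ab_group_add"
  by (simp_all add: additive.add[OF sh_additive] additive.diff[OF sh_additive]
      additive.minus[OF sh_additive] additive.zero[OF sh_additive])

lemma decomp: "u = dl (u 0) + sh (\<lambda>k. u (Suc k))" for u :: "nat \<Rightarrow> 'a::monoid_add"
  by (rule ext) (auto simp: dl_def sh_def split: nat.splits)

lemma dl_0[simp]: "dl x 0 = x" and dl_Suc[simp]: "dl x (Suc k) = 0"
  by (simp_all add: dl_def)

lemma st2_0[simp]: "st2 M u v 0 = M 0 (u 0) (v 0)"
  by (simp add: st2_def)

lemma stF_0[simp]: "stF F u 0 = F 0 (u 0)"
  by (simp add: stF_def)

lemma biadd_st2:
  assumes "\<And>i. biadd (M i)"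
  shows "biadd (st2 M)"
  unfolding biadd_def
proof (intro conjI allI)
  fix c show "additive (\<lambda>a. st2 M a c)"
    by standard (auto simp: st2_def biadd_rules[OF assms] sum.distrib)
next
  fix a show "additive (st2 M a)"
    by standard (auto simp: st2_def biadd_rules[OF assms] sum.distrib)
qed

lemma additive_stF:
  assumes "\<And>i. additive (F i)"
  shows "additive (stF F)"
  by standard (auto simp: stF_def additive.add[OF assms] sum.distrib)

lemma st2_sh1:
  assumes "\<And>i. biadd (M i)"
  shows "st2 M (sh u) v = sh (st2 M u v)"
proof (rule ext)
  fix n show "st2 M (sh u) v n = sh (st2 M u v) n"
  proof (cases n)
    case 0 then show ?thesis by (simp add: biadd_rules[OF assms])
  next
    case (Suc m)
    have "st2 M (sh u) v (Suc m) = (\<Sum>i\<le>Suc m. \<Sum>j\<le>Suc m - i. M i (sh u j) (v (Suc m - i - j)))"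
      by (simp add: st2_def)
    also have "\<dots> = (\<Sum>i\<le>m. \<Sum>j\<le>Suc m - i. M i (sh u j) (v (Suc m - i - j)))"
      by (simp add: biadd_rules[OF assms])
    also have "\<dots> = (\<Sum>i\<le>m. \<Sum>j\<le>m - i. M i (u j) (v (m - i - j)))"
    proof (rule sum.cong[OF refl])
      fix i assume "i \<in> {..m}"
      then have e: "Suc m - i = Suc (m - i)" by auto
      show "(\<Sum>j\<le>Suc m - i. M i (sh u j) (v (Suc m - i - j))) = (\<Sum>j\<le>m - i. M i (u j) (v (m - i - j)))"
        unfolding e sum.atMost_Suc_shift by (simp add: biadd_rules[OF assms])
    qed
    finally show ?thesis using Suc by (simp add: st2_def)
  qed
qed

lemma st2_sh2:
  assumes "\<And>i. biadd (M i)"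
  shows "st2 M u (sh v) = sh (st2 M u v)"
proof (rule ext)
  fix n show "st2 M u (sh v) n = sh (st2 M u v) n"
  proof (cases n)
    case 0 then show ?thesis by (simp add: biadd_rules[OF assms])
  next
    case (Suc m)
    have "st2 M u (sh v) (Suc m) = (\<Sum>i\<le>Suc m. \<Sum>j\<le>Suc m - i. M i (u j) (sh v (Suc m - i - j)))"
      by (simp add: st2_def)
    also have "\<dots> = (\<Sum>i\<le>m. \<Sum>j\<le>Suc m - i. M i (u j) (sh v (Suc m - i - j)))"
      by (simp add: biadd_rules[OF assms])
    also have "\<dots> = (\<Sum>i\<le>m. \<Sum>j\<le>m - i. M i (u j) (v (m - i - j)))"
    proof (rule sum.cong[OF refl])
      fix i assume "i \<in> {..m}"
      then have e: "Suc m - i = Suc (m - i)" by auto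
      have "(\<Sum>j\<le>Suc (m - i). M i (u j) (sh v (Suc (m - i) - j)))
          = (\<Sum>j\<le>m - i. M i (u j) (sh v (Suc (m - i) - j)))"
        by (simp add: biadd_rules[OF assms])
      also have "\<dots> = (\<Sum>j\<le>m - i. M i (u j) (v (m - i - j)))"
        by (rule sum.cong[OF refl]) (simp add: Suc_diff_le)
      finally show "(\<Sum>j\<le>Suc m - i. M i (u j) (sh v (Suc m - i - j))) = (\<Sum>j\<le>m - i. M i (u j) (v (m - i - j)))"
        unfolding e .
    qed
    finally show ?thesis using Suc by (simp add: st2_def)
  qed
qed

lemma stF_sh:
  assumes "\<And>i. additive (F i)"
  shows "stF F (sh u) = sh (stF F u)"
proof (rule ext)
  fix n show "stF F (sh u) n = sh (stF F u) n"
  proof (cases n)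
    case 0 then show ?thesis by (simp add: additive.zero[OF assms])
  next
    case (Suc m)
    have "stF F (sh u) (Suc m) = (\<Sum>i\<le>m. F i (sh u (Suc m - i)))"
      by (simp add: stF_def additive.zero[OF assms])
    also have "\<dots> = (\<Sum>i\<le>m. F i (u (m - i)))"
      by (rule sum.cong[OF refl]) (simp add: Suc_diff_le)
    finally show ?thesis using Suc by (simp add: stF_def)
  qed
qed



lemma trunc3:
  fixes \<Phi> :: "(nat \<Rightarrow> 'a::ab_group_add) \<Rightarrow> (nat \<Rightarrow> 'b::ab_group_add) \<Rightarrow> (nat \<Rightarrow> 'c::ab_group_add) \<Rightarrow> nat \<Rightarrow> 'd::ab_group_add"
  assumes a1: "\<And>v w. additive (\<lambda>u. \<Phi> u v w)" and a2: "\<And>u w. additive (\<lambda>v. \<Phi> u v w)"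
    and a3: "\<And>u v. additive (\<Phi> u v)"
    and s1: "\<And>u v w. \<Phi> (sh u) v w = sh (\<Phi> u v w)"
    and s2: "\<And>u v w. \<Phi> u (sh v) w = sh (\<Phi> u v w)"
    and s3: "\<And>u v w. \<Phi> u v (sh w) = sh (\<Phi> u v w)"
    and z: "\<And>x y z k. k < n \<Longrightarrow> \<Phi> (dl x) (dl y) (dl z) k = 0"
  shows "\<forall>u v w. \<forall>k<n. \<Phi> u v w k = 0" and "\<Phi> u v w n = \<Phi> (dl (u 0)) (dl (v 0)) (dl (w 0)) n"
proof -
  have key: "\<Phi> u v w k = \<Phi> (dl (u 0)) (dl (v 0)) (dl (w 0)) k
      + sh (\<Phi> (\<lambda>k. u (Suc k)) v w) k + sh (\<Phi> (dl (u 0)) (\<lambda>k. v (Suc k)) w) k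
      + sh (\<Phi> (dl (u 0)) (dl (v 0)) (\<lambda>k. w (Suc k))) k" for u v w k
  proof -
    have "\<Phi> u v w = \<Phi> (dl (u 0) + sh (\<lambda>k. u (Suc k))) v w" using decomp[of u] by simp
    also have "\<dots> = \<Phi> (dl (u 0)) v w + sh (\<Phi> (\<lambda>k. u (Suc k)) v w)"
      by (simp add: additive.add[OF a1] s1)
    also have "\<Phi> (dl (u 0)) v w = \<Phi> (dl (u 0)) (dl (v 0) + sh (\<lambda>k. v (Suc k))) w"
      using decomp[of v] by simp
    also have "\<dots> = \<Phi> (dl (u 0)) (dl (v 0)) w + sh (\<Phi> (dl (u 0)) (\<lambda>k. v (Suc k)) w)"
      by (simp add: additive.add[OF a2] s2)
    also have "\<Phi> (dl (u 0)) (dl (v 0)) w = \<Phi> (dl (u 0)) (dl (v 0)) (dl (w 0) + sh (\<lambda>k. w (Suc k)))"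
      using decomp[of w] by simp
    also have "\<dots> = \<Phi> (dl (u 0)) (dl (v 0)) (dl (w 0)) + sh (\<Phi> (dl (u 0)) (dl (v 0)) (\<lambda>k. w (Suc k)))"
      by (simp add: additive.add[OF a3] s3)
    finally show ?thesis by (simp add: algebra_simps)
  qed
  show P: "\<forall>u v w. \<forall>k<n. \<Phi> u v w k = 0"
  proof (intro allI impI)
    fix u v w k assume "k < n"
    then show "\<Phi> u v w k = 0"
    proof (induction k arbitrary: u v w)
      case 0 then show ?case by (subst key) (simp add: z)
    next
      case (Suc k) then show ?case by (subst key) (simp add: z)
    qed
  qed
  show "\<Phi> u v w n = \<Phi> (dl (u 0)) (dl (v 0)) (dl (w 0)) n"
  proof (cases n)
    case 0 then show ?thesis by (subst key) simp
  next
    case (Suc m) then show ?thesis using P by (subst key) simp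
  qed
qed

lemma trunc2:
  fixes \<Phi> :: "(nat \<Rightarrow> 'a::ab_group_add) \<Rightarrow> (nat \<Rightarrow> 'b::ab_group_add) \<Rightarrow> nat \<Rightarrow> 'd::ab_group_add"
  assumes a1: "\<And>v. additive (\<lambda>u. \<Phi> u v)" and a2: "\<And>u. additive (\<Phi> u)"
    and s1: "\<And>u v. \<Phi> (sh u) v = sh (\<Phi> u v)"
    and s2: "\<And>u v. \<Phi> u (sh v) = sh (\<Phi> u v)"
    and z: "\<And>x y k. k < n \<Longrightarrow> \<Phi> (dl x) (dl y) k = 0"
  shows "\<forall>u v. \<forall>k<n. \<Phi> u v k = 0" and "\<Phi> u v n = \<Phi> (dl (u 0)) (dl (v 0)) n"
proof -
  have key: "\<Phi> u v k = \<Phi> (dl (u 0)) (dl (v 0)) k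
      + sh (\<Phi> (\<lambda>k. u (Suc k)) v) k + sh (\<Phi> (dl (u 0)) (\<lambda>k. v (Suc k))) k" for u v k
  proof -
    have "\<Phi> u v = \<Phi> (dl (u 0) + sh (\<lambda>k. u (Suc k))) v" using decomp[of u] by simp
    also have "\<dots> = \<Phi> (dl (u 0)) v + sh (\<Phi> (\<lambda>k. u (Suc k)) v)"
      by (simp add: additive.add[OF a1] s1)
    also have "\<Phi> (dl (u 0)) v = \<Phi> (dl (u 0)) (dl (v 0) + sh (\<lambda>k. v (Suc k)))"
      using decomp[of v] by simp
    also have "\<dots> = \<Phi> (dl (u 0)) (dl (v 0)) + sh (\<Phi> (dl (u 0)) (\<lambda>k. v (Suc k)))"
      by (simp add: additive.add[OF a2] s2)
    finally show ?thesis by (simp add: algebra_simps)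
  qed
  show P: "\<forall>u v. \<forall>k<n. \<Phi> u v k = 0"
  proof (intro allI impI)
    fix u v k assume "k < n"
    then show "\<Phi> u v k = 0"
    proof (induction k arbitrary: u v)
      case 0 then show ?case by (subst key) (simp add: z)
    next
      case (Suc k) then show ?case by (subst key) (simp add: z)
    qed
  qed
  show "\<Phi> u v n = \<Phi> (dl (u 0)) (dl (v 0)) n"
  proof (cases n)
    case 0 then show ?thesis by (subst key) simp
  next
    case (Suc m) then show ?thesis using P by (subst key) simp
  qed
qed

lemma shpow_zero_below:
  assumes "\<forall>k<n. a k = (0::'a::zero)"
  shows "a = (sh ^^ n) (\<lambda>k. a (k + n))"
  using assms
proof (induction n arbitrary: a)
  case 0 then show ?case by simp
next
  case (Suc n)
  have "(\<lambda>k. a (k + 1)) = (sh ^^ n) (\<lambda>k. a (k + Suc n))"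
    using Suc.IH[of "\<lambda>k. a (k + 1)"] Suc.prems by simp
  moreover have "a = sh (\<lambda>k. a (k + 1))"
    using Suc.prems by (auto simp: sh_def split: nat.splits)
  ultimately show ?case by (simp add: funpow_swap1)
qed

lemma shpow_at: "(sh ^^ n) b n = b 0"
  by (induction n arbitrary: b) simp_all

lemma Z1:
  assumes "\<And>i. biadd (M i)" "\<forall>k<n. a k = 0"
  shows "st2 M u a n = M 0 (u 0) (a n)"
proof -
  have "st2 M u ((sh ^^ n) b) = (sh ^^ n) (st2 M u b)" for b
    by (induction n) (simp_all add: st2_sh2[OF assms(1)])
  then have "st2 M u a n = st2 M u (\<lambda>k. a (k + n)) 0"
    using shpow_zero_below[OF assms(2)] shpow_at by metis
  then show ?thesis by simp
qed

lemma Z2: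
  assumes "\<And>i. biadd (M i)" "\<forall>k<n. a k = 0"
  shows "st2 M a u n = M 0 (a n) (u 0)"
proof -
  have "st2 M ((sh ^^ n) b) u = (sh ^^ n) (st2 M b u)" for b
    by (induction n) (simp_all add: st2_sh1[OF assms(1)])
  then have "st2 M a u n = st2 M (\<lambda>k. a (k + n)) u 0"
    using shpow_zero_below[OF assms(2)] shpow_at by metis
  then show ?thesis by simp
qed

lemma Z3:
  assumes "\<And>i. additive (F i)" "\<forall>k<n. a k = 0"
  shows "stF F a n = F 0 (a n)"
proof -
  have "stF F ((sh ^^ n) b) = (sh ^^ n) (stF F b)" for b
    by (induction n) (simp_all add: stF_sh[OF assms(1)])
  then have "stF F a n = stF F (\<lambda>k. a (k + n)) 0"
    using shpow_zero_below[OF assms(2)] shpow_at by metis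
  then show ?thesis by simp
qed

lemma sum_only0:
  fixes n :: nat
  assumes "\<And>i. 0 < i \<Longrightarrow> i \<le> n \<Longrightarrow> g i = 0"
  shows "(\<Sum>i\<le>n. g i) = g 0"
proof (cases n)
  case 0 then show ?thesis by simp
next
  case (Suc m)
  then show ?thesis using assms by (simp add: sum.atMost_Suc_shift del: sum.atMost_Suc)
qed

lemma sum_onlylast:
  fixes n :: nat
  assumes "\<And>i. i < n \<Longrightarrow> g i = 0"
  shows "(\<Sum>i\<le>n. g i) = g n"
proof -
  have "(\<Sum>i\<le>n. g i) = (\<Sum>i\<le>n. g (n - (n - i)))" by (rule sum.cong) auto
  also have "\<dots> = (\<Sum>i\<le>n. g (n - i))"
    by (rule sum.reindex_bij_witness[where i="\<lambda>i. n - i" and j="\<lambda>i. n - i"]) auto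
  also have "\<dots> = g (n - 0)" by (rule sum_only0) (use assms in auto)
  finally show ?thesis by simp
qed

lemma st2_dl1:
  assumes "\<And>i. biadd (M i)"
  shows "st2 M (dl x) v n = (\<Sum>i\<le>n. M i x (v (n - i)))"
  unfolding st2_def
  by (rule sum.cong[OF refl], subst sum_only0) (auto simp: dl_def biadd_rules[OF assms])

lemma st2_dl2:
  assumes "\<And>i. biadd (M i)"
  shows "st2 M u (dl z) n = (\<Sum>i\<le>n. M i (u (n - i)) z)"
  unfolding st2_def
  by (rule sum.cong[OF refl], subst sum_onlylast) (auto simp: dl_def biadd_rules[OF assms])

lemma st2_dl12:
  assumes "\<And>i. biadd (M i)"
  shows "st2 M (dl x) (dl y) n = M n x y"
  unfolding st2_dl1[OF assms]
  by (subst sum_onlylast) (auto simp: dl_def biadd_rules[OF assms])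

lemma stF_dl:
  assumes "\<And>i. additive (F i)"
  shows "stF F (dl x) n = F n x"
  unfolding stF_def
  by (subst sum_onlylast) (auto simp: dl_def additive.zero[OF assms])



definition LR :: "(nat \<Rightarrow> 'a::ab_group_add \<Rightarrow> 'a \<Rightarrow> 'a) \<Rightarrow> nat \<Rightarrow> 'a \<Rightarrow> 'a \<Rightarrow> 'a \<Rightarrow> 'a" where
  "LR M n x y z = (\<Sum>i\<le>n. M i (M (n - i) x y) z)
      - (\<Sum>i\<le>n. M i x (M (n - i) y z) + M i x (M (n - i) z y))"

definition LF :: "(nat \<Rightarrow> 'a::ab_group_add \<Rightarrow> 'a \<Rightarrow> 'a) \<Rightarrow> (nat \<Rightarrow> 'b::ab_group_add \<Rightarrow> 'b \<Rightarrow> 'b)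
    \<Rightarrow> (nat \<Rightarrow> 'a \<Rightarrow> 'b) \<Rightarrow> nat \<Rightarrow> 'a \<Rightarrow> 'a \<Rightarrow> 'b" where
  "LF MR MS F n x y = (\<Sum>i\<le>n. F i (MR (n - i) x y))
      - (\<Sum>i\<le>n. \<Sum>j\<le>n - i. MS i (F j x) (F (n - i - j) y))"

lemma EQ_R:
  assumes "\<And>i. biadd (M i)"
  shows "LR M n x y z = Az (st2 M) (dl x) (dl y) (dl z) n"
proof -
  have 1: "st2 M (st2 M (dl x) (dl y)) (dl z) n = (\<Sum>i\<le>n. M i (M (n - i) x y) z)"
    by (subst st2_dl2[OF assms]) (simp only: st2_dl12[OF assms])
  have 2: "st2 M (dl x) (st2 M (dl y) (dl z)) n = (\<Sum>i\<le>n. M i x (M (n - i) y z))"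
    by (subst st2_dl1[OF assms]) (simp only: st2_dl12[OF assms])
  have 3: "st2 M (dl x) (st2 M (dl z) (dl y)) n = (\<Sum>i\<le>n. M i x (M (n - i) z y))"
    by (subst st2_dl1[OF assms]) (simp only: st2_dl12[OF assms])
  show ?thesis unfolding LR_def Az_def by (simp add: 1 2 3 sum.distrib)
qed

lemma EQ_F:
  assumes "\<And>i. additive (F i)" "\<And>i. biadd (MR i)"
  shows "LF MR MS F n x y = Ez (st2 MR) (st2 MS) (stF F) (dl x) (dl y) n"
proof -
  have 1: "stF F (st2 MR (dl x) (dl y)) n = (\<Sum>i\<le>n. F i (MR (n - i) x y))"
    by (simp only: stF_def st2_dl12[OF assms(2)])
  have 2: "st2 MS (stF F (dl x)) (stF F (dl y)) n = (\<Sum>i\<le>n. \<Sum>j\<le>n - i. MS i (F j x) (F (n - i - j) y))"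
    by (simp only: st2_def stF_dl[OF assms(1)])
  show ?thesis unfolding LF_def Ez_def by (simp add: 1 2)
qed

lemma sum_ends:
  fixes n :: nat and g g' :: "nat \<Rightarrow> 'a::ab_group_add"
  assumes "0 < n" "\<And>i. 0 < i \<Longrightarrow> i < n \<Longrightarrow> g' i = g i"
  shows "(\<Sum>i\<le>n. g' i) = (\<Sum>i\<le>n. g i) + (g' 0 - g 0) + (g' n - g n)"
proof -
  obtain m where n: "n = Suc m" using assms(1) by (cases n) auto
  have "(\<Sum>i\<le>n. g' i) - (\<Sum>i\<le>n. g i) = (\<Sum>i\<le>n. g' i - g i)" by (simp add: sum_subtractf)
  also have "\<dots> = (\<Sum>i\<le>m. g' i - g i) + (g' n - g n)" by (simp add: n)
  also have "(\<Sum>i\<le>m. g' i - g i) = g' 0 - g 0"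
    by (rule sum_only0) (use assms n in auto)
  finally show ?thesis by (simp add: algebra_simps)
qed

lemma ins_R:
  assumes b: "\<And>i. biadd (M i)" and Mn: "M n = (\<lambda>_ _. 0)" and n: "0 < n" and bx: "biadd \<xi>"
  shows "LR (M(n := \<xi>)) n x y z = LR M n x y z - d2 (M 0) (M 0) (M 0) \<xi> x y z"
proof -
  have 1: "(\<Sum>i\<le>n. (M(n := \<xi>)) i ((M(n := \<xi>)) (n - i) x y) z)
      = (\<Sum>i\<le>n. M i (M (n - i) x y) z) + (M 0 (\<xi> x y) z) + \<xi> (M 0 x y) z"
    by (subst sum_ends[OF n, where g="\<lambda>i. M i (M (n - i) x y) z"]) (use n in \<open>auto simp: Mn biadd_rules[OF b]\<close>)
  have 2: "(\<Sum>i\<le>n. (M(n := \<xi>)) i x ((M(n := \<xi>)) (n - i) y z) + (M(n := \<xi>)) i x ((M(n := \<xi>)) (n - i) z y))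
      = (\<Sum>i\<le>n. M i x (M (n - i) y z) + M i x (M (n - i) z y)) + (M 0 x (\<xi> y z) + M 0 x (\<xi> z y))
        + (\<xi> x (M 0 y z) + \<xi> x (M 0 z y))"
    by (subst sum_ends[OF n, where g="\<lambda>i. M i x (M (n - i) y z) + M i x (M (n - i) z y)"]) (use n in \<open>auto simp: Mn biadd_rules[OF b]\<close>)
  show ?thesis unfolding LR_def 1 2 d2_def by (simp add: biadd_rules[OF bx] biadd_rules[OF b] algebra_simps)
qed

lemma ins_F:
  assumes bR: "\<And>i. biadd (MR i)" and bS: "\<And>i. biadd (MS i)" and aF: "\<And>i. additive (F i)"
    and MRn: "MR n = (\<lambda>_ _. 0)" and MSn: "MS n = (\<lambda>_ _. 0)" and Fn: "F n = (\<lambda>_. 0)" and n: "0 < n"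
    and bp: "biadd \<pi>"
  shows "LF (MR(n := \<xi>)) (MS(n := \<pi>)) (F(n := \<phi>)) n x y = LF MR MS F n x y
     + (F 0 (\<xi> x y) - \<pi> (F 0 x) (F 0 y) - d1 (MR 0) (\<lambda>r s. MS 0 (F 0 r) s) (\<lambda>s r. MS 0 s (F 0 r)) \<phi> x y)"
proof -
  have 1: "(\<Sum>i\<le>n. (F(n := \<phi>)) i ((MR(n := \<xi>)) (n - i) x y))
      = (\<Sum>i\<le>n. F i (MR (n - i) x y)) + F 0 (\<xi> x y) + \<phi> (MR 0 x y)"
    by (subst sum_ends[OF n, where g="\<lambda>i. F i (MR (n - i) x y)"]) (use n in \<open>auto simp: MRn Fn additive.zero[OF aF]\<close>)
  have inner: "(\<Sum>j\<le>n. MS 0 ((F(n := \<phi>)) j x) ((F(n := \<phi>)) (n - j) y))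
      = (\<Sum>j\<le>n. MS 0 (F j x) (F (n - j) y)) + MS 0 (F 0 x) (\<phi> y) + MS 0 (\<phi> x) (F 0 y)"
    by (subst sum_ends[OF n, where g="\<lambda>j. MS 0 (F j x) (F (n - j) y)"]) (use n in \<open>auto simp: Fn biadd_rules[OF bS]\<close>)
  have 2: "(\<Sum>i\<le>n. \<Sum>j\<le>n - i. (MS(n := \<pi>)) i ((F(n := \<phi>)) j x) ((F(n := \<phi>)) (n - i - j) y))
      = (\<Sum>i\<le>n. \<Sum>j\<le>n - i. MS i (F j x) (F (n - i - j) y)) + (MS 0 (F 0 x) (\<phi> y) + MS 0 (\<phi> x) (F 0 y))
        + \<pi> (F 0 x) (F 0 y)"
  proof (subst sum_ends[OF n, where g="\<lambda>i. \<Sum>j\<le>n - i. MS i (F j x) (F (n - i - j) y)"])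
    fix i assume i: "0 < i" "i < n"
    show "(\<Sum>j\<le>n - i. (MS(n := \<pi>)) i ((F(n := \<phi>)) j x) ((F(n := \<phi>)) (n - i - j) y))
        = (\<Sum>j\<le>n - i. MS i (F j x) (F (n - i - j) y))"
      by (rule sum.cong[OF refl]) (use i in auto)
  next
    show "(\<Sum>i\<le>n. \<Sum>j\<le>n - i. MS i (F j x) (F (n - i - j) y)) +
      ((\<Sum>j\<le>n - 0. (MS(n := \<pi>)) 0 ((F(n := \<phi>)) j x) ((F(n := \<phi>)) (n - 0 - j) y)) -
       (\<Sum>j\<le>n - 0. MS 0 (F j x) (F (n - 0 - j) y))) +
      ((\<Sum>j\<le>n - n. (MS(n := \<pi>)) n ((F(n := \<phi>)) j x) ((F(n := \<phi>)) (n - n - j) y)) -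
       (\<Sum>j\<le>n - n. MS n (F j x) (F (n - n - j) y))) =
      (\<Sum>i\<le>n. \<Sum>j\<le>n - i. MS i (F j x) (F (n - i - j) y)) + (MS 0 (F 0 x) (\<phi> y) + MS 0 (\<phi> x) (F 0 y)) +
      \<pi> (F 0 x) (F 0 y)"
      using n inner by (simp add: MSn)
  qed
  show ?thesis unfolding LF_def 1 2 d1_def by (simp add: algebra_simps)
qed



lemma Az_add:
  assumes "biadd m"
  shows "additive (\<lambda>u. Az m u v w)" "additive (\<lambda>v. Az m u v w)" "additive (Az m u v)"
  by (auto simp: additive_def Az_def biadd_rules[OF assms] algebra_simps)

lemma Az_sh:
  assumes "biadd m" "\<And>u v. m (sh u) v = sh (m u v)" "\<And>u v. m u (sh v) = sh (m u v)"
  shows "Az m (sh u) v w = sh (Az m u v w)" "Az m u (sh v) w = sh (Az m u v w)"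
    "Az m u v (sh w) = sh (Az m u v w)"
  by (simp_all add: Az_def assms sh_rules)

lemma Ez_add:
  assumes "biadd mR" "biadd mS" "additive F"
  shows "additive (\<lambda>u. - Ez mR mS F u v)" "additive (\<lambda>v. - Ez mR mS F u v)"
  by (auto simp: additive_def Ez_def biadd_rules[OF assms(1)] biadd_rules[OF assms(2)]
      additive.add[OF assms(3)] algebra_simps)

lemma Ez_sh:
  assumes "\<And>u v. mR (sh u) v = sh (mR u v)" "\<And>u v. mR u (sh v) = sh (mR u v)"
    "\<And>u v. mS (sh u) v = sh (mS u v)" "\<And>u v. mS u (sh v) = sh (mS u v)"
    "\<And>u. F (sh u) = sh (F u)"
  shows "- Ez mR mS F (sh u) v = sh (- Ez mR mS F u v)" "- Ez mR mS F u (sh v) = sh (- Ez mR mS F u v)"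
  by (simp_all add: Ez_def assms sh_rules)

lemma cocycR:
  assumes b: "\<And>i. biadd (M i)" and z: "\<And>k x y z. k < n \<Longrightarrow> LR M k x y z = 0"
  shows "d3 (M 0) (M 0) (M 0) (\<lambda>x y z. LR M n x y z) x y z w = 0"
proof -
  define \<Phi> where "\<Phi> = Az (st2 M)"
  have bs: "biadd (st2 M)" by (rule biadd_st2[OF b])
  have zz: "\<And>x y z k. k < n \<Longrightarrow> \<Phi> (dl x) (dl y) (dl z) k = 0"
    using z by (simp add: \<Phi>_def EQ_R[OF b, symmetric])
  note tr = trunc3[of \<Phi>, OF Az_add[OF bs, folded \<Phi>_def] Az_sh[OF bs st2_sh1[OF b] st2_sh2[OF b], folded \<Phi>_def] zz]
  have LRn: "LR M n x y z = \<Phi> (dl x) (dl y) (dl z) n" for x y z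
    by (simp add: \<Phi>_def EQ_R[OF b])
  have "d3 (st2 M) (st2 M) (st2 M) \<Phi> (dl x) (dl y) (dl z) (dl w) = 0"
    unfolding \<Phi>_def by (rule I1[OF bs])
  then have 0: "d3 (st2 M) (st2 M) (st2 M) \<Phi> (dl x) (dl y) (dl z) (dl w) n = 0" by simp
  define a where "a = \<Phi> (dl y) (dl z) (dl w) - \<Phi> (dl z) (dl w) (dl y) + \<Phi> (dl z) (dl y) (dl w) - \<Phi> (dl w) (dl z) (dl y)"
  have az: "\<forall>k<n. a k = 0" using tr(1) by (simp add: a_def)
  have e1: "st2 M (dl x) a n = M 0 x (a n)" using Z1[OF b az, where u="dl x"] by simp
  have e2: "st2 M (\<Phi> (dl x) (dl y) (dl z)) (dl w) n = M 0 (\<Phi> (dl x) (dl y) (dl z) n) w"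
    by (subst Z2[OF b]) (use tr(1) in auto)
  have e3: "\<Phi> (st2 M (dl x) (dl y)) (dl z) (dl w) n = \<Phi> (dl (M 0 x y)) (dl z) (dl w) n"
    using tr(2)[where u="st2 M (dl x) (dl y)" and v="dl z" and w="dl w"] by simp
  have e4: "\<Phi> (dl x) (st2 M (dl y) (dl z) + st2 M (dl z) (dl y)) (dl w) n
      = \<Phi> (dl x) (dl (M 0 y z + M 0 z y)) (dl w) n"
    using tr(2)[where u="dl x" and v="st2 M (dl y) (dl z) + st2 M (dl z) (dl y)" and w="dl w"] by simp
  have e5: "\<Phi> (dl x) (dl y) (st2 M (dl z) (dl w) + st2 M (dl w) (dl z)) n
      = \<Phi> (dl x) (dl y) (dl (M 0 z w + M 0 w z)) n"
    using tr(2)[where u="dl x" and v="dl y" and w="st2 M (dl z) (dl w) + st2 M (dl w) (dl z)"] by simp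
  have "d3 (st2 M) (st2 M) (st2 M) \<Phi> (dl x) (dl y) (dl z) (dl w) n
      = st2 M (dl x) a n - \<Phi> (st2 M (dl x) (dl y)) (dl z) (dl w) n
        + \<Phi> (dl x) (st2 M (dl y) (dl z) + st2 M (dl z) (dl y)) (dl w) n
        - \<Phi> (dl x) (dl y) (st2 M (dl z) (dl w) + st2 M (dl w) (dl z)) n
        + st2 M (\<Phi> (dl x) (dl y) (dl z)) (dl w) n"
    unfolding d3_def a_def by simp
  also have "\<dots> = d3 (M 0) (M 0) (M 0) (\<lambda>x y z. LR M n x y z) x y z w"
    unfolding e1 e2 e3 e4 e5 d3_def LRn by (simp add: a_def)
  finally show ?thesis using 0 by simp
qed

lemma cocycF:
  assumes bR: "\<And>i. biadd (MR i)" and bS: "\<And>i. biadd (MS i)" and aF: "\<And>i. additive (F i)"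
    and zR: "\<And>k x y z. k < n \<Longrightarrow> LR MR k x y z = 0"
    and zS: "\<And>k x y z. k < n \<Longrightarrow> LR MS k x y z = 0"
    and zF: "\<And>k x y. k < n \<Longrightarrow> LF MR MS F k x y = 0"
  shows "F 0 (LR MR n x y z) - LR MS n (F 0 x) (F 0 y) (F 0 z)
     - d2 (MR 0) (\<lambda>r s. MS 0 (F 0 r) s) (\<lambda>s r. MS 0 s (F 0 r)) (\<lambda>x y. - LF MR MS F n x y) x y z = 0"
proof -
  define \<Phi> where "\<Phi> = Az (st2 MR)"
  define \<Phi>' where "\<Phi>' = Az (st2 MS)"
  define \<Psi> where "\<Psi> = (\<lambda>a b. - Ez (st2 MR) (st2 MS) (stF F) a b)"
  have bsR: "biadd (st2 MR)" by (rule biadd_st2[OF bR])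
  have bsS: "biadd (st2 MS)" by (rule biadd_st2[OF bS])
  have aFs: "additive (stF F)" by (rule additive_stF[OF aF])
  have zz: "\<And>x y z k. k < n \<Longrightarrow> \<Phi> (dl x) (dl y) (dl z) k = 0"
    using zR by (simp add: \<Phi>_def EQ_R[OF bR, symmetric])
  have zz': "\<And>x y z k. k < n \<Longrightarrow> \<Phi>' (dl x) (dl y) (dl z) k = 0"
    using zS by (simp add: \<Phi>'_def EQ_R[OF bS, symmetric])
  have zzF: "\<And>x y k. k < n \<Longrightarrow> \<Psi> (dl x) (dl y) k = 0"
    using zF by (simp add: \<Psi>_def EQ_F[OF aF bR, symmetric])
  note tr = trunc3[of \<Phi>, OF Az_add[OF bsR, folded \<Phi>_def] Az_sh[OF bsR st2_sh1[OF bR] st2_sh2[OF bR], folded \<Phi>_def] zz]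
  note tr' = trunc3[of \<Phi>', OF Az_add[OF bsS, folded \<Phi>'_def] Az_sh[OF bsS st2_sh1[OF bS] st2_sh2[OF bS], folded \<Phi>'_def] zz']
  have sh1: "\<And>u v. st2 MR (sh u) v = sh (st2 MR u v)" by (rule st2_sh1[OF bR])
  have sh2: "\<And>u v. st2 MR u (sh v) = sh (st2 MR u v)" by (rule st2_sh2[OF bR])
  have sh3: "\<And>u v. st2 MS (sh u) v = sh (st2 MS u v)" by (rule st2_sh1[OF bS])
  have sh4: "\<And>u v. st2 MS u (sh v) = sh (st2 MS u v)" by (rule st2_sh2[OF bS])
  have sh5: "\<And>u. stF F (sh u) = sh (stF F u)" by (rule stF_sh[OF aF])
  have p1: "\<And>v. additive (\<lambda>u. \<Psi> u v)" using Ez_add(1)[OF bsR bsS aFs] by (simp add: \<Psi>_def)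
  have p2: "\<And>u. additive (\<Psi> u)" using Ez_add(2)[OF bsR bsS aFs] by (simp add: \<Psi>_def)
  have p3: "\<And>u v. \<Psi> (sh u) v = sh (\<Psi> u v)"
    using Ez_sh(1)[of "st2 MR" "st2 MS" "stF F", OF sh1 sh2 sh3 sh4 sh5] by (simp add: \<Psi>_def)
  have p4: "\<And>u v. \<Psi> u (sh v) = sh (\<Psi> u v)"
    using Ez_sh(2)[of "st2 MR" "st2 MS" "stF F", OF sh1 sh2 sh3 sh4 sh5] by (simp add: \<Psi>_def)
  note trF = trunc2[of \<Psi>, OF p1 p2 p3 p4 zzF]
  have LRn: "LR MR n x y z = \<Phi> (dl x) (dl y) (dl z) n" for x y z
    by (simp add: \<Phi>_def EQ_R[OF bR])
  have LSn: "LR MS n x y z = \<Phi>' (dl x) (dl y) (dl z) n" for x y z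
    by (simp add: \<Phi>'_def EQ_R[OF bS])
  have LFn: "- LF MR MS F n x y = \<Psi> (dl x) (dl y) n" for x y
    by (simp add: \<Psi>_def EQ_F[OF aF bR])
  have I2n: "stF F (\<Phi> (dl x) (dl y) (dl z)) - \<Phi>' (stF F (dl x)) (stF F (dl y)) (stF F (dl z))
     - d2 (st2 MR) (\<lambda>r s. st2 MS (stF F r) s) (\<lambda>s r. st2 MS s (stF F r)) \<Psi> (dl x) (dl y) (dl z) = 0"
    unfolding \<Phi>_def \<Phi>'_def \<Psi>_def by (rule I2[OF bsR bsS aFs])
  have 0: "stF F (\<Phi> (dl x) (dl y) (dl z)) n - \<Phi>' (stF F (dl x)) (stF F (dl y)) (stF F (dl z)) n
     - d2 (st2 MR) (\<lambda>r s. st2 MS (stF F r) s) (\<lambda>s r. st2 MS s (stF F r)) \<Psi> (dl x) (dl y) (dl z) n = 0"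
    using fun_cong[OF I2n, of n] by (simp only: minus_apply zero_fun_apply)
  have e1: "stF F (\<Phi> (dl x) (dl y) (dl z)) n = F 0 (\<Phi> (dl x) (dl y) (dl z) n)"
    by (rule Z3[OF aF]) (use tr(1) in auto)
  have e2: "\<Phi>' (stF F (dl x)) (stF F (dl y)) (stF F (dl z)) n = \<Phi>' (dl (F 0 x)) (dl (F 0 y)) (dl (F 0 z)) n"
    using tr'(2)[where u="stF F (dl x)" and v="stF F (dl y)" and w="stF F (dl z)"] by simp
  define a where "a = \<Psi> (dl y) (dl z) + \<Psi> (dl z) (dl y)"
  have az: "\<forall>k<n. a k = 0" using trF(1) by (simp add: a_def)
  have e3: "st2 MS (stF F (dl x)) a n = MS 0 (F 0 x) (a n)"
    using Z1[OF bS az, where u="stF F (dl x)"] by simp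
  have e4: "st2 MS (\<Psi> (dl x) (dl y)) (stF F (dl z)) n = MS 0 (\<Psi> (dl x) (dl y) n) (F 0 z)"
    using Z2[OF bS, where a="\<Psi> (dl x) (dl y)" and u="stF F (dl z)"] trF(1) by simp
  have e5: "\<Psi> (st2 MR (dl x) (dl y)) (dl z) n = \<Psi> (dl (MR 0 x y)) (dl z) n"
    using trF(2)[where u="st2 MR (dl x) (dl y)" and v="dl z"] by simp
  have e6: "\<Psi> (dl x) (st2 MR (dl y) (dl z) + st2 MR (dl z) (dl y)) n
      = \<Psi> (dl x) (dl (MR 0 y z + MR 0 z y)) n"
    using trF(2)[where u="dl x" and v="st2 MR (dl y) (dl z) + st2 MR (dl z) (dl y)"] by simp
  have "d2 (st2 MR) (\<lambda>r s. st2 MS (stF F r) s) (\<lambda>s r. st2 MS s (stF F r)) \<Psi> (dl x) (dl y) (dl z) n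
      = st2 MS (stF F (dl x)) a n - \<Psi> (st2 MR (dl x) (dl y)) (dl z) n
        + \<Psi> (dl x) (st2 MR (dl y) (dl z) + st2 MR (dl z) (dl y)) n
        - st2 MS (\<Psi> (dl x) (dl y)) (stF F (dl z)) n"
    unfolding d2_def a_def by simp
  also have "\<dots> = d2 (MR 0) (\<lambda>r s. MS 0 (F 0 r) s) (\<lambda>s r. MS 0 s (F 0 r)) (\<lambda>x y. - LF MR MS F n x y) x y z"
    unfolding e3 e4 e5 e6 d2_def LFn by (simp add: a_def)
  finally show ?thesis using 0 unfolding e1 e2 LRn LSn by simp
qed



lemma C2_biadd: "m \<in> C2 s1 s2 \<Longrightarrow> biadd m"
  by (auto simp: C2_def biadd_def additive_def Vector_Spaces.linear_iff)

lemma C2_scale: "m \<in> C2 s1 s2 \<Longrightarrow> m (s1 c a) b = s2 c (m a b)" "m \<in> C2 s1 s2 \<Longrightarrow> m a (s1 c b) = s2 c (m a b)"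
  by (auto simp: C2_def Vector_Spaces.linear_iff)

lemma C1_add: "F \<in> C1 s1 s2 \<Longrightarrow> additive F"
  by (auto simp: C1_def additive_def Vector_Spaces.linear_iff)

lemma C1_scale: "F \<in> C1 s1 s2 \<Longrightarrow> F (s1 c a) = s2 c (F a)"
  by (auto simp: C1_def Vector_Spaces.linear_iff)

lemma LR_C3:
  assumes vs: "vector_space s" and M: "\<And>i. M i \<in> C2 s s"
  shows "(\<lambda>x y z. LR M n x y z) \<in> C3 s s"
proof -
  have ms: "module s" using vs by (simp add: module_iff_vector_space)
  note b = biadd_rules[OF C2_biadd[OF M]]
  note sc = C2_scale[OF M] module.scale_sum_right[OF ms] module.scale_right_diff_distrib[OF ms]
     module.scale_right_distrib[OF ms]
  show ?thesis unfolding C3_def Vector_Spaces.linear_iff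
    by (auto simp: vs LR_def b sc sum.distrib algebra_simps)
qed

lemma LF_C2:
  assumes vR: "vector_space sR" and vS: "vector_space sS" and MR: "\<And>i. MR i \<in> C2 sR sR"
    and MS: "\<And>i. MS i \<in> C2 sS sS" and F: "\<And>i. F i \<in> C1 sR sS"
  shows "(\<lambda>x y. - LF MR MS F n x y) \<in> C2 sR sS"
proof -
  have ms: "module sS" using vS by (simp add: module_iff_vector_space)
  note b = biadd_rules[OF C2_biadd[OF MR]] biadd_rules[OF C2_biadd[OF MS]]
    additive.add[OF C1_add[OF F]] additive.diff[OF C1_add[OF F]]
  note sc = C2_scale[OF MR] C2_scale[OF MS] C1_scale[OF F] module.scale_sum_right[OF ms]
     module.scale_right_diff_distrib[OF ms] module.scale_right_distrib[OF ms] module.scale_minus_right[OF ms]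
  show ?thesis unfolding C2_def Vector_Spaces.linear_iff
    by (auto simp: vR vS LF_def b sc sum.distrib algebra_simps)
qed

lemma LR_cong:
  assumes "\<And>i. i \<le> n \<Longrightarrow> M i = M' i"
  shows "LR M n x y z = LR M' n x y z"
  unfolding LR_def using assms by (intro arg_cong2[where f="(-)"] sum.cong) auto

lemma LF_cong:
  assumes "\<And>i. i \<le> n \<Longrightarrow> MR i = MR' i" "\<And>i. i \<le> n \<Longrightarrow> MS i = MS' i" "\<And>i. i \<le> n \<Longrightarrow> F i = F' i"
  shows "LF MR MS F n x y = LF MR' MS' F' n x y"
  unfolding LF_def using assms by (intro arg_cong2[where f="(-)"] sum.cong) auto



definition z3 :: "('r::ab_group_add \<Rightarrow> 'r \<Rightarrow> 'r) \<times> ('s::ab_group_add \<Rightarrow> 's \<Rightarrow> 's) \<times> ('r \<Rightarrow> 's)" where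
  "z3 = ((\<lambda>_ _. 0), (\<lambda>_ _. 0), (\<lambda>_. 0))"

definition goodd where
  "goodd sR sS mR mS f \<theta>1 N \<Theta> \<longleftrightarrow> \<Theta> 0 = (mR, mS, f) \<and> \<Theta> 1 = \<theta>1 \<and> (\<forall>i. \<Theta> i \<in> Cf2 sR sS)
     \<and> (\<forall>i>N. \<Theta> i = z3)
     \<and> (\<forall>k\<le>N. \<forall>x y z. LR (\<lambda>i. fst (\<Theta> i)) k x y z = 0)
     \<and> (\<forall>k\<le>N. \<forall>x y z. LR (\<lambda>i. fst (snd (\<Theta> i))) k x y z = 0)
     \<and> (\<forall>k\<le>N. \<forall>x y. LF (\<lambda>i. fst (\<Theta> i)) (\<lambda>i. fst (snd (\<Theta> i))) (\<lambda>i. snd (snd (\<Theta> i))) k x y = 0)"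

lemma z3_Cf2:
  assumes "vector_space sR" "vector_space sS"
  shows "z3 \<in> Cf2 sR sS"
  using assms by (auto simp: z3_def Cf2_def C2_def C1_def Vector_Spaces.linear_iff
      module.scale_zero_right[OF iffD2[OF module_iff_vector_space]])

lemma Cf2_parts:
  assumes "t \<in> Cf2 sR sS"
  shows "fst t \<in> C2 sR sR" "fst (snd t) \<in> C2 sS sS" "snd (snd t) \<in> C1 sR sS"
  using assms by (auto simp: Cf2_def)

lemma step:
  assumes vR: "vector_space sR" and vS: "vector_space sS"
    and H3: "H3_zero sR sS mR mS f" and N: "1 \<le> N" and g: "goodd sR sS mR mS f \<theta>1 N \<Theta>"
  shows "\<exists>b. goodd sR sS mR mS f \<theta>1 (Suc N) (\<Theta>(Suc N := b))"
proof -
  define n where "n = Suc N"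
  define MR where "MR = (\<lambda>i. fst (\<Theta> i))"
  define MS where "MS = (\<lambda>i. fst (snd (\<Theta> i)))"
  define F where "F = (\<lambda>i. snd (snd (\<Theta> i)))"
  have Cf: "\<And>i. \<Theta> i \<in> Cf2 sR sS" using g by (simp add: goodd_def)
  have CR: "\<And>i. MR i \<in> C2 sR sR" and CS: "\<And>i. MS i \<in> C2 sS sS" and CF: "\<And>i. F i \<in> C1 sR sS"
    using Cf2_parts[OF Cf] by (simp_all add: MR_def MS_def F_def)
  have bR: "\<And>i. biadd (MR i)" and bS: "\<And>i. biadd (MS i)" and aF: "\<And>i. additive (F i)"
    using C2_biadd[OF CR] C2_biadd[OF CS] C1_add[OF CF] by auto
  have MR0: "MR 0 = mR" and MS0: "MS 0 = mS" and F0: "F 0 = f"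
    using g by (simp_all add: goodd_def MR_def MS_def F_def)
  have \<Theta>n: "\<Theta> n = z3" using g by (simp add: goodd_def n_def)
  then have MRn: "MR n = (\<lambda>_ _. 0)" and MSn: "MS n = (\<lambda>_ _. 0)" and Fn: "F n = (\<lambda>_. 0)"
    by (simp_all add: MR_def MS_def F_def z3_def)
  have zR: "\<And>k x y z. k < n \<Longrightarrow> LR MR k x y z = 0"
    using g by (auto simp: goodd_def MR_def n_def)
  have zS: "\<And>k x y z. k < n \<Longrightarrow> LR MS k x y z = 0"
    using g by (auto simp: goodd_def MS_def n_def)
  have zF: "\<And>k x y. k < n \<Longrightarrow> LF MR MS F k x y = 0"
    using g by (auto simp: goodd_def MR_def MS_def F_def n_def)
  define c where "c = ((\<lambda>x y z. LR MR n x y z), (\<lambda>x y z. LR MS n x y z), (\<lambda>x y. - LF MR MS F n x y))"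
  have cC: "c \<in> Cf3 sR sS"
    unfolding c_def Cf3_def using LR_C3[OF vR CR] LR_C3[OF vS CS] LF_C2[OF vR vS CR CS CF] by auto
  have dc: "df3 mR mS f c = (\<lambda>_ _ _ _. 0, \<lambda>_ _ _ _. 0, \<lambda>_ _ _. 0)"
    unfolding df3_def c_def
    using cocycR[where M=MR, OF bR zR] cocycR[where M=MS, OF bS zS] cocycF[where MR=MR and MS=MS and F=F, OF bR bS aF zR zS zF]
    by (simp add: MR0 MS0 F0 fun_eq_iff)
  obtain b where bC: "b \<in> Cf2 sR sS" and db: "df2 mR mS f b = c"
    using H3 cC dc unfolding H3_zero_def by blast
  obtain \<xi> \<pi> \<phi> where b: "b = (\<xi>, \<pi>, \<phi>)" by (cases b) auto
  have bx: "biadd \<xi>" and bp: "biadd \<pi>"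
    using Cf2_parts[OF bC] C2_biadd by (auto simp: b)
  have d1: "\<And>x y z. d2 mR mR mR \<xi> x y z = LR MR n x y z"
    and d2': "\<And>x y z. d2 mS mS mS \<pi> x y z = LR MS n x y z"
    and d3': "\<And>x y. f (\<xi> x y) - \<pi> (f x) (f y) - d1 mR (\<lambda>r s. mS (f r) s) (\<lambda>s r. mS s (f r)) \<phi> x y
               = - LF MR MS F n x y"
    using db unfolding df2_def c_def b by (simp_all add: fun_eq_iff)
  have pr: "(\<lambda>i. fst ((\<Theta>(n := b)) i)) = MR(n := \<xi>)" "(\<lambda>i. fst (snd ((\<Theta>(n := b)) i))) = MS(n := \<pi>)"
    "(\<lambda>i. snd (snd ((\<Theta>(n := b)) i))) = F(n := \<phi>)"
    by (auto simp: MR_def MS_def F_def b)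
  have n0: "0 < n" by (simp add: n_def)
  have eR: "LR (MR(n := \<xi>)) k x y z = 0" if "k \<le> n" for k x y z
  proof (cases "k = n")
    case True
    then show ?thesis using ins_R[where M=MR, OF bR MRn n0 bx] d1 by (simp add: MR0)
  next
    case False
    then have "LR (MR(n := \<xi>)) k x y z = LR MR k x y z" using that by (intro LR_cong) auto
    then show ?thesis using zR False that by simp
  qed
  have eS: "LR (MS(n := \<pi>)) k x y z = 0" if "k \<le> n" for k x y z
  proof (cases "k = n")
    case True
    then show ?thesis using ins_R[where M=MS, OF bS MSn n0 bp] d2' by (simp add: MS0)
  next
    case False
    then have "LR (MS(n := \<pi>)) k x y z = LR MS k x y z" using that by (intro LR_cong) auto
    then show ?thesis using zS False that by simp
  qed
  have eF: "LF (MR(n := \<xi>)) (MS(n := \<pi>)) (F(n := \<phi>)) k x y = 0" if "k \<le> n" for k x y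
  proof (cases "k = n")
    case True
    then show ?thesis using ins_F[where MR=MR and MS=MS and F=F and \<xi>=\<xi> and \<phi>=\<phi> and x=x and y=y, OF bR bS aF MRn MSn Fn n0 bp] d3'[of x y]
      by (simp add: MR0 MS0 F0)
  next
    case False
    then have "LF (MR(n := \<xi>)) (MS(n := \<pi>)) (F(n := \<phi>)) k x y = LF MR MS F k x y"
      using that by (intro LF_cong) auto
    then show ?thesis using zF False that by simp
  qed
  have "goodd sR sS mR mS f \<theta>1 (Suc N) (\<Theta>(n := b))"
    unfolding goodd_def pr
  proof (intro conjI allI impI)
    show "(\<Theta>(n := b)) 0 = (mR, mS, f)" using g by (simp add: goodd_def n_def)
    show "(\<Theta>(n := b)) 1 = \<theta>1" using g N by (simp add: goodd_def n_def)
    fix i show "(\<Theta>(n := b)) i \<in> Cf2 sR sS" using Cf bC by simp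
  next
    fix i assume "Suc N < i" then show "(\<Theta>(n := b)) i = z3" using g by (simp add: goodd_def n_def)
  next
    fix k x y z assume "k \<le> Suc N"
    then show "LR (MR(n := \<xi>)) k x y z = 0"
      using eR by (simp_all add: n_def)
  next
    fix k x y z assume "k \<le> Suc N"
    then show "LR (MS(n := \<pi>)) k x y z = 0"
      using eS by (simp_all add: n_def)
  next
    fix k x y assume "k \<le> Suc N"
    then show "LF (MR(n := \<xi>)) (MS(n := \<pi>)) (F(n := \<phi>)) k x y = 0" using eF by (simp add: n_def)
  qed
  then show ?thesis unfolding n_def by blast
qed



lemma base:
  assumes R: "zinb_alg sR mR" and S: "zinb_alg sS mS" and hf: "zinb_morphism sR sS mR mS f"
    and cC: "\<theta>1 \<in> Cf2 sR sS" and cd: "df2 mR mS f \<theta>1 = (\<lambda>_ _ _. 0, \<lambda>_ _ _. 0, \<lambda>_ _. 0)"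
  shows "goodd sR sS mR mS f \<theta>1 1 (\<lambda>i. if i = 0 then (mR, mS, f) else if i = 1 then \<theta>1 else z3)"
proof -
  have vR: "vector_space sR" and vS: "vector_space sS" and zR: "zinbiel mR" and zS: "zinbiel mS"
    and lf: "Vector_Spaces.linear sR sS f" and hom: "\<And>x y. f (mR x y) = mS (f x) (f y)"
    using R S hf by (auto simp: zinb_alg_def zinb_morphism_def)
  have mRC: "mR \<in> C2 sR sR" and mSC: "mS \<in> C2 sS sS" and fC: "f \<in> C1 sR sS"
    using R S lf by (auto simp: zinb_alg_def C2_def C1_def)
  obtain \<xi> \<pi> \<phi> where th: "\<theta>1 = (\<xi>, \<pi>, \<phi>)" by (cases \<theta>1) auto
  have bx: "biadd \<xi>" and bp: "biadd \<pi>" using Cf2_parts[OF cC] C2_biadd by (auto simp: th)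
  have d1: "\<And>x y z. d2 mR mR mR \<xi> x y z = 0"
    and d2': "\<And>x y z. d2 mS mS mS \<pi> x y z = 0"
    and d3': "\<And>x y. f (\<xi> x y) - \<pi> (f x) (f y) - d1 mR (\<lambda>r s. mS (f r) s) (\<lambda>s r. mS s (f r)) \<phi> x y = 0"
    using cd unfolding df2_def th by (simp_all add: fun_eq_iff)
  define MR where "MR = (\<lambda>i::nat. if i = 0 then mR else (\<lambda>_ _. 0))"
  define MS where "MS = (\<lambda>i::nat. if i = 0 then mS else (\<lambda>_ _. 0))"
  define F where "F = (\<lambda>i::nat. if i = 0 then f else (\<lambda>_. 0))"
  have bmR: "biadd mR" and bmS: "biadd mS" and af: "additive f"
    using C2_biadd[OF mRC] C2_biadd[OF mSC] C1_add[OF fC] by auto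
  have bR: "\<And>i. biadd (MR i)" and bS: "\<And>i. biadd (MS i)" and aF: "\<And>i. additive (F i)"
    using bmR bmS af by (auto simp: MR_def MS_def F_def biadd_def additive_def)
  have pr: "(\<lambda>i. fst ((\<lambda>i. if i = 0 then (mR, mS, f) else if i = 1 then \<theta>1 else z3) i)) = MR(1 := \<xi>)"
    "(\<lambda>i. fst (snd ((\<lambda>i. if i = 0 then (mR, mS, f) else if i = 1 then \<theta>1 else z3) i))) = MS(1 := \<pi>)"
    "(\<lambda>i. snd (snd ((\<lambda>i. if i = 0 then (mR, mS, f) else if i = 1 then \<theta>1 else z3) i))) = F(1 := \<phi>)"
    by (auto simp: MR_def MS_def F_def th z3_def)
  have LR1: "LR MR 1 x y z = 0" for x y z
    by (simp add: LR_def MR_def biadd_rules[OF bmR])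
  have LS1: "LR MS 1 x y z = 0" for x y z
    by (simp add: LR_def MS_def biadd_rules[OF bmS])
  have LF1: "LF MR MS F 1 x y = 0" for x y
    by (simp add: LF_def MR_def MS_def F_def biadd_rules[OF bmS] additive.zero[OF af])
  have one: "(0::nat) < 1" by simp
  have eR: "LR (MR(1 := \<xi>)) k x y z = 0" if "k \<le> 1" for k x y z
  proof (cases "k = 1")
    case True
    then show ?thesis using ins_R[where M=MR, OF bR _ one bx] d1 LR1 by (simp add: MR_def)
  next
    case False
    then have "k = 0" using that by simp
    then show ?thesis using zR by (simp add: LR_def MR_def zinbiel_def)
  qed
  have eS: "LR (MS(1 := \<pi>)) k x y z = 0" if "k \<le> 1" for k x y z
  proof (cases "k = 1")
    case True
    then show ?thesis using ins_R[where M=MS, OF bS _ one bp] d2' LS1 by (simp add: MS_def)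
  next
    case False
    then have "k = 0" using that by simp
    then show ?thesis using zS by (simp add: LR_def MS_def zinbiel_def)
  qed
  have eF: "LF (MR(1 := \<xi>)) (MS(1 := \<pi>)) (F(1 := \<phi>)) k x y = 0" if "k \<le> 1" for k x y
  proof (cases "k = 1")
    case True
    then show ?thesis
      using ins_F[where MR=MR and MS=MS and F=F and \<xi>=\<xi> and \<phi>=\<phi> and x=x and y=y and n=1,
          OF bR bS aF _ _ _ one bp] d3'[of x y] LF1[of x y]
      by (simp add: MR_def MS_def F_def)
  next
    case False
    then have "k = 0" using that by simp
    then show ?thesis by (simp add: LF_def MR_def MS_def F_def hom)
  qed
  show ?thesis
    unfolding goodd_def pr
  proof (intro conjI allI impI)
    fix i show "(if i = 0 then (mR, mS, f) else if i = 1 then \<theta>1 else z3) \<in> Cf2 sR sS"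
      using cC z3_Cf2[OF vR vS] mRC mSC fC by (auto simp: Cf2_def)
  next
    fix k :: nat and x y z assume "k \<le> 1" then show "LR (MR(1 := \<xi>)) k x y z = 0" using eR by simp
  next
    fix k :: nat and x y z assume "k \<le> 1" then show "LR (MS(1 := \<pi>)) k x y z = 0" using eS by simp
  next
    fix k :: nat and x y assume "k \<le> 1" then show "LF (MR(1 := \<xi>)) (MS(1 := \<pi>)) (F(1 := \<phi>)) k x y = 0"
      using eF by simp
  qed auto
qed



theorem corollary5p3:
  fixes sR :: "'k::field \<Rightarrow> 'r::ab_group_add \<Rightarrow> 'r"
    and sS :: "'k \<Rightarrow> 's::ab_group_add \<Rightarrow> 's"
    and mR :: "'r \<Rightarrow> 'r \<Rightarrow> 'r" and mS :: "'s \<Rightarrow> 's \<Rightarrow> 's" and f :: "'r \<Rightarrow> 's"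
    and \<theta>1 :: "('r \<Rightarrow> 'r \<Rightarrow> 'r) \<times> ('s \<Rightarrow> 's \<Rightarrow> 's) \<times> ('r \<Rightarrow> 's)"
  assumes R: "zinb_alg sR mR"
    and S: "zinb_alg sS mS"
    and hf: "zinb_morphism sR sS mR mS f"
    and H3: "H3_zero sR sS mR mS f"
    and cocycle: "\<theta>1 \<in> Cf2 sR sS" "df2 mR mS f \<theta>1 = (\<lambda>_ _ _. 0, \<lambda>_ _ _. 0, \<lambda>_ _. 0)"
  shows "\<exists>MR MS F. is_deformation sR sS mR mS f MR MS F \<and> (MR 1, MS 1, F 1) = \<theta>1"
proof -
  have vR: "vector_space sR" and vS: "vector_space sS"
    using R S by (auto simp: zinb_alg_def)
  let ?G = "goodd sR sS mR mS f \<theta>1"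
  have "\<forall>N \<Theta>. \<exists>b. 1 \<le> N \<and> ?G N \<Theta> \<longrightarrow> ?G (Suc N) (\<Theta>(Suc N := b))"
    using step[OF vR vS H3] by blast
  then obtain nxt where nxt: "\<And>N \<Theta>. 1 \<le> N \<Longrightarrow> ?G N \<Theta> \<Longrightarrow> ?G (Suc N) (\<Theta>(Suc N := nxt N \<Theta>))"
    by metis
  define \<Theta>1 where "\<Theta>1 = (\<lambda>i::nat. if i = 0 then (mR, mS, f) else if i = 1 then \<theta>1 else z3)"
  define P where "P = rec_nat \<Theta>1 (\<lambda>N \<Theta>. \<Theta>(Suc (Suc N) := nxt (Suc N) \<Theta>))"
  have P0: "P 0 = \<Theta>1" and PS: "\<And>N. P (Suc N) = (P N)(Suc (Suc N) := nxt (Suc N) (P N))"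
    by (simp_all add: P_def)
  have gP: "?G (Suc N) (P N)" for N
  proof (induction N)
    case 0 then show ?case using base[OF R S hf cocycle] by (simp add: P0 \<Theta>1_def)
  next
    case (Suc N)
    show ?case unfolding PS by (rule nxt) (simp_all add: Suc.IH)
  qed
  have agree: "P (N + d) k = P N k" if "k \<le> Suc N" for N d k
    using that by (induction d) (auto simp: PS)
  define T where "T = (\<lambda>k. P k k)"
  have T_eq: "T i = P n i" if "i \<le> n" for i n
  proof -
    have "P n i = P (i + (n - i)) i" using that by simp
    also have "\<dots> = P i i" by (rule agree) simp
    finally show ?thesis by (simp add: T_def)
  qed
  define MR where "MR = (\<lambda>i. fst (T i))"
  define MS where "MS = (\<lambda>i. fst (snd (T i)))"
  define F where "F = (\<lambda>i. snd (snd (T i)))"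
  have gg: "\<And>N. P N 0 = (mR, mS, f)" "\<And>N. P N 1 = \<theta>1" "\<And>N i. P N i \<in> Cf2 sR sS"
    using gP by (auto simp: goodd_def)
  have eqR: "LR MR n x y z = 0" for n x y z
  proof -
    have "LR MR n x y z = LR (\<lambda>i. fst (P n i)) n x y z"
      by (rule LR_cong) (simp add: MR_def T_eq)
    also have "\<dots> = 0" using gP[of n] by (simp add: goodd_def)
    finally show ?thesis .
  qed
  have eqS: "LR MS n x y z = 0" for n x y z
  proof -
    have "LR MS n x y z = LR (\<lambda>i. fst (snd (P n i))) n x y z"
      by (rule LR_cong) (simp add: MS_def T_eq)
    also have "\<dots> = 0" using gP[of n] by (simp add: goodd_def)
    finally show ?thesis .
  qed
  have eqF: "LF MR MS F n x y = 0" for n x y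
  proof -
    have "LF MR MS F n x y = LF (\<lambda>i. fst (P n i)) (\<lambda>i. fst (snd (P n i))) (\<lambda>i. snd (snd (P n i))) n x y"
      by (rule LF_cong) (simp_all add: MR_def MS_def F_def T_eq)
    also have "\<dots> = 0" using gP[of n] by (simp add: goodd_def)
    finally show ?thesis .
  qed
  have "is_deformation sR sS mR mS f MR MS F"
    unfolding is_deformation_def
  proof (intro conjI allI)
    show "MR 0 = mR" "MS 0 = mS" "F 0 = f" using gg(1)[of 0] by (simp_all add: MR_def MS_def F_def T_def)
  next
    fix i show "(MR i, MS i, F i) \<in> Cf2 sR sS" using gg(3)[of i i] by (simp add: MR_def MS_def F_def T_def)
  next
    fix n x y z show "(\<Sum>i\<le>n. MR i (MR (n - i) x y) z)
                = (\<Sum>i\<le>n. MR i x (MR (n - i) y z) + MR i x (MR (n - i) z y))"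
      using eqR[of n x y z] by (simp add: LR_def)
  next
    fix n x y z show "(\<Sum>i\<le>n. MS i (MS (n - i) x y) z)
                = (\<Sum>i\<le>n. MS i x (MS (n - i) y z) + MS i x (MS (n - i) z y))"
      using eqS[of n x y z] by (simp add: LR_def)
  next
    fix n x y show "(\<Sum>i\<le>n. F i (MR (n - i) x y))
               = (\<Sum>i\<le>n. \<Sum>j\<le>n - i. MS i (F j x) (F (n - i - j) y))"
      using eqF[of n x y] by (simp add: LF_def)
  qed
  moreover have "(MR 1, MS 1, F 1) = \<theta>1"
    using gg(2)[of 1] by (simp add: MR_def MS_def F_def T_def)
  ultimately show ?thesis by blast
qed


end
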